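(* Let $K\ge 2$, $D\ge 1$, and let $x(1),\dots,x(K)\in[0,1]^D$ be distinct points, with $d(i,j):=\|x(i)-x(j)\|$ and $\Delta_{x}:=\min_{i\neq j} d(i,j)>0$. Let $L>0$ and let $\mu_1,\dots,\mu_M\in[0,1]^K$ satisfy $|\mu_m(i)-\mu_m(j)|\le L\,d(i,j)$ for all $i,j\in[K]$ and $m\in[M]$. Let $L_m:=\max_{i\neq j}\frac{|\mu_m(i)-\mu_m(j)|}{d(i,j)}$. Assume: (i) (learnability) there are $\alpha>0$ and $\varepsilon_\alpha>0$ with $|\{m\in[M]: L_m\ge L-\varepsilon_\alpha\}|\ge \alpha M$; (ii) (minimal exploration) for some $\tau>0$, in every episode $m$ every arm $i\in[K]$ is pulled at least $\tau$ times. For each episode $m$ let $\hat\mu_m(i)$ be the empirical mean of the observed rewards of arm $i$ in episode $m$, let $\hat L_m:=\max_{i\neq j}\frac{|\hat\mu_m(i)-\hat\mu_m(j)|}{d(i,j)}$, and for $\beta\in(0,\alpha)$ let $\ell_\beta$ be the $\lceil \beta M\rceil$-th largest element of $(\hat L_m)_{m\in[M]}$. Let $\varepsilon_\beta>\varepsilon_\alpha$ and $\varepsilon':=\varepsilon_\beta-\varepsilon_\alpha$. If $$\tau\ \ge\ \frac{4}{\Delta_x^2(\varepsilon_\beta-\varepsilon_\alpha)^2}\left(\ln(2K)+\frac{1}{\min\{\beta,\alpha-\beta\}}\right),$$ then $$\Pr[L>\ell_\beta+\varepsilon_\beta]+\Pr[\ell_\beta>L+\varepsilon']\ \le\ 8M\exp\!\left(-\frac{\Delta_x^2\varepsilon'^2}{4}\min\{\beta,\alpha-\beta\}\,\tau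 M\right).$$
   Context: Setting: a sequence of $M$ independent episodes of a $K$-armed stochastic bandit. In episode $m$, each pull of arm $i$ yields a reward drawn i.i.d. from the Bernoulli distribution with mean $\mu_m(i)$. The arms have a known embedding $x(i)\in[0,1]^D$. $[M]=\{1,\dots,M\}$. *)

theory Defs
  imports "HOL-Analysis.Analysis" "HOL-Probability.Probability"
begin

text \<open>Arms are indexed by i < K, episodes by m < M (0-based). In episode m arm i
is pulled n m i times; sample point: (m,i,k) maps to the k-th reward of arm i in episode m.\<close>

definition min_gap :: "nat \<Rightarrow> (nat \<Rightarrow> real^'d::finite) \<Rightarrow> real" where
  "min_gap K x = Min {norm (x i - x j) | i j. i < K \<and> j < K \<and> i \<noteq> j}"

definition lip_const :: "nat \<Rightarrow> (nat \<Rightarrow> real^'d::finite) \<Rightarrow> (nat \<Rightarrow> real) \<Rightarrow> real" where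
  "lip_const K x f = Max {\<bar>f i - f j\<bar> / norm (x i - x j) | i j. i < K \<and> j < K \<and> i \<noteq> j}"

definition reward_pmf :: "nat \<Rightarrow> nat \<Rightarrow> (nat \<Rightarrow> nat \<Rightarrow> nat) \<Rightarrow> (nat \<Rightarrow> nat \<Rightarrow> real)
    \<Rightarrow> (nat \<times> nat \<times> nat \<Rightarrow> bool) pmf" where
  "reward_pmf M K n \<mu> = Pi_pmf {(m, i, k). m < M \<and> i < K \<and> k < n m i} False
      (\<lambda>(m, i, k). bernoulli_pmf (\<mu> m i))"

definition emp_mean :: "(nat \<Rightarrow> nat \<Rightarrow> nat) \<Rightarrow> (nat \<times> nat \<times> nat \<Rightarrow> bool) \<Rightarrow> nat \<Rightarrow> nat \<Rightarrow> real" where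
  "emp_mean n \<omega> m i = (\<Sum>k<n m i. of_bool (\<omega> (m, i, k))) / real (n m i)"

definition kth_largest :: "nat \<Rightarrow> real list \<Rightarrow> real" where
  "kth_largest k xs = rev (sort xs) ! (k - 1)"

end

theory Submission
  imports Defs
begin

lemma prob_pair_pmf_times:
  "measure_pmf.prob (pair_pmf M N) (A \<times> B) = measure_pmf.prob M A * measure_pmf.prob N B"
proof -
  have "measure_pmf.prob (pair_pmf M N) (A \<times> B) = measure_pmf.prob (pair_pmf M N) ((A \<times> B) \<inter> set_pmf (pair_pmf M N))"
    using measure_Int_set_pmf[of "pair_pmf M N" "A \<times> B"] by simp
  also have "(A \<times> B) \<inter> set_pmf (pair_pmf M N) = (A \<inter> set_pmf M) \<times> (B \<inter> set_pmf N)" by auto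
  also have "measure_pmf.prob (pair_pmf M N) \<dots> = measure_pmf.prob M (A \<inter> set_pmf M) * measure_pmf.prob N (B \<inter> set_pmf N)"
    by (rule measure_pmf_prob_product) (auto intro: countable_subset[OF _ countable_set_pmf])
  finally show ?thesis by (simp add: measure_Int_set_pmf)
qed

lemma prob_Pi_pmf_local:
  assumes "finite I" "J \<subseteq> I" "\<And>f g. (\<forall>x\<in>J. f x = g x) \<Longrightarrow> Q f = Q g"
  shows "measure_pmf.prob (Pi_pmf I d p) {f. Q f} = measure_pmf.prob (Pi_pmf J d p) {f. Q f}"
proof -
  have "Pi_pmf J d p = map_pmf (\<lambda>f x. if x \<in> J then f x else d) (Pi_pmf I d p)"
    using assms by (intro Pi_pmf_subset) auto
  moreover have "Q (\<lambda>x. if x \<in> J then f x else d) = Q f" for f by (rule assms(3)) auto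
  hence "(\<lambda>f x. if x \<in> J then f x else d) -` {f. Q f} = {f. Q f}"
    by auto
  ultimately show ?thesis by simp
qed

lemma prob_Pi_pmf_indep2:
  assumes I: "finite I" and J: "J1 \<subseteq> I" "J2 \<subseteq> I" "J1 \<inter> J2 = {}"
    and Q1: "\<And>f g. (\<forall>x\<in>J1. f x = g x) \<Longrightarrow> Q1 f = Q1 g"
    and Q2: "\<And>f g. (\<forall>x\<in>J2. f x = g x) \<Longrightarrow> Q2 f = Q2 g"
  shows "measure_pmf.prob (Pi_pmf I d p) {f. Q1 f \<and> Q2 f}
       = measure_pmf.prob (Pi_pmf I d p) {f. Q1 f} * measure_pmf.prob (Pi_pmf I d p) {f. Q2 f}"
proof -
  have f1: "finite J1" "finite J2" using I J finite_subset by blast+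
  have vim: "(\<lambda>(f,g) x. if x \<in> J1 then f x else g x) -` {f. Q1 f \<and> Q2 f} = {f. Q1 f} \<times> {g. Q2 g}"
  proof -
    have "Q1 (\<lambda>x. if x \<in> J1 then f x else g x) = Q1 f" for f g by (rule Q1) auto
    moreover have "Q2 (\<lambda>x. if x \<in> J1 then f x else g x) = Q2 g" for f g by (rule Q2) (use J in auto)
    ultimately show ?thesis by auto
  qed
  have "measure_pmf.prob (Pi_pmf I d p) {f. Q1 f \<and> Q2 f} = measure_pmf.prob (Pi_pmf (J1 \<union> J2) d p) {f. Q1 f \<and> Q2 f}"
  proof (rule prob_Pi_pmf_local)
    show "finite I" by (rule I)
    show "J1 \<union> J2 \<subseteq> I" using J by blast
    fix f g :: "'a \<Rightarrow> 'b" assume fg: "\<forall>x\<in>J1 \<union> J2. f x = g x"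
    have "Q1 f = Q1 g" by (rule Q1) (use fg in blast)
    moreover have "Q2 f = Q2 g" by (rule Q2) (use fg in blast)
    ultimately show "(Q1 f \<and> Q2 f) = (Q1 g \<and> Q2 g)" by simp
  qed
  also have "Pi_pmf (J1 \<union> J2) d p = map_pmf (\<lambda>(f,g) x. if x \<in> J1 then f x else g x)
             (pair_pmf (Pi_pmf J1 d p) (Pi_pmf J2 d p))"
    by (rule Pi_pmf_union) (use f1 J in auto)
  also have "measure_pmf.prob (map_pmf (\<lambda>(f,g) x. if x \<in> J1 then f x else g x)
             (pair_pmf (Pi_pmf J1 d p) (Pi_pmf J2 d p))) {f. Q1 f \<and> Q2 f} = 
     measure_pmf.prob (pair_pmf (Pi_pmf J1 d p) (Pi_pmf J2 d p)) ({f. Q1 f} \<times> {g. Q2 g})"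
    by (simp only: measure_map_pmf vim)
  also have "\<dots> = measure_pmf.prob (Pi_pmf J1 d p) {f. Q1 f} * measure_pmf.prob (Pi_pmf J2 d p) {f. Q2 f}"
    by (rule prob_pair_pmf_times)
  also have "measure_pmf.prob (Pi_pmf J1 d p) {f. Q1 f} = measure_pmf.prob (Pi_pmf I d p) {f. Q1 f}"
    by (rule prob_Pi_pmf_local[symmetric, OF I J(1) Q1])
  also have "measure_pmf.prob (Pi_pmf J2 d p) {f. Q2 f} = measure_pmf.prob (Pi_pmf I d p) {f. Q2 f}"
    by (rule prob_Pi_pmf_local[symmetric, OF I J(2) Q2])
  finally show ?thesis .
qed

lemma prob_Pi_pmf_indep:
  assumes I: "finite I" and S: "finite S" and J: "\<forall>m\<in>S. J m \<subseteq> I" "disjoint_family_on J S"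
    and Q: "\<And>m f g. m \<in> S \<Longrightarrow> (\<forall>x\<in>J m. f x = g x) \<Longrightarrow> Q m f = Q m g"
  shows "measure_pmf.prob (Pi_pmf I d p) {f. \<forall>m\<in>S. Q m f} = (\<Prod>m\<in>S. measure_pmf.prob (Pi_pmf I d p) {f. Q m f})"
  using S J Q
proof (induction S rule: finite_induct)
  case empty
  then show ?case by simp
next
  case (insert a S)
  have "measure_pmf.prob (Pi_pmf I d p) {f. \<forall>m\<in>insert a S. Q m f}
     = measure_pmf.prob (Pi_pmf I d p) {f. Q a f \<and> (\<forall>m\<in>S. Q m f)}" by simp
  also have "\<dots> = measure_pmf.prob (Pi_pmf I d p) {f. Q a f} * measure_pmf.prob (Pi_pmf I d p) {f. \<forall>m\<in>S. Q m f}"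
  proof (rule prob_Pi_pmf_indep2[where ?J1.0 = "J a" and ?J2.0 = "\<Union>m\<in>S. J m"])
    show "finite I" by (rule I)
    show "J a \<subseteq> I" using insert.prems(1) by simp
    show "(\<Union>m\<in>S. J m) \<subseteq> I" using insert.prems(1) by blast
    show "J a \<inter> (\<Union>m\<in>S. J m) = {}"
    proof -
      have "J a \<inter> J m = {}" if m: "m \<in> S" for m
      proof -
        have "a \<in> insert a S" "m \<in> insert a S" "a \<noteq> m" using m insert.hyps(2) by auto
        thus ?thesis using insert.prems(2) unfolding disjoint_family_on_def by blast
      qed
      thus ?thesis by blast
    qed
    show "Q a f = Q a g" if "\<forall>x\<in>J a. f x = g x" for f g
      by (rule insert.prems(3)) (use that in simp_all)
    show "(\<forall>m\<in>S. Q m f) = (\<forall>m\<in>S. Q m g)" if "\<forall>x\<in>\<Union>m\<in>S. J m. f x = g x" for f g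
    proof -
      have "Q m f = Q m g" if "m \<in> S" for m
        by (rule insert.prems(3)) (use that \<open>\<forall>x\<in>\<Union>m\<in>S. J m. f x = g x\<close> in auto)
      thus ?thesis by blast
    qed
  qed
  also have "measure_pmf.prob (Pi_pmf I d p) {f. \<forall>m\<in>S. Q m f} = (\<Prod>m\<in>S. measure_pmf.prob (Pi_pmf I d p) {f. Q m f})"
  proof (rule insert.IH)
    show "\<forall>m\<in>S. J m \<subseteq> I" using insert.prems(1) by blast
    show "disjoint_family_on J S" by (rule disjoint_family_on_mono[OF subset_insertI insert.prems(2)])
    show "Q m f = Q m g" if "m \<in> S" "\<forall>x\<in>J m. f x = g x" for m f g
      by (rule insert.prems(3)) (use that in auto)
  qed
  also have "measure_pmf.prob (Pi_pmf I d p) {f. Q a f} * (\<Prod>m\<in>S. measure_pmf.prob (Pi_pmf I d p) {f. Q m f}) = (\<Prod>m\<in>insert a S. measure_pmf.prob (Pi_pmf I d p) {f. Q m f})"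
    by (rule prod.insert[symmetric]) (use insert.hyps in auto)
  finally show ?case .
qed

definition armset :: "nat \<Rightarrow> nat \<Rightarrow> (nat \<Rightarrow> nat \<Rightarrow> nat) \<Rightarrow> (nat \<times> nat \<times> nat) set" where
  "armset M K n = {(m, i, k). m < M \<and> i < K \<and> k < n m i}"

lemma finite_armset: "finite (armset M K n)"
proof -
  have "armset M K n \<subseteq> Sigma {..<M} (\<lambda>m. Sigma {..<K} (\<lambda>i. {..<n m i}))"
    by (auto simp: armset_def)
  moreover have "finite (Sigma {..<M} (\<lambda>m. Sigma {..<K} (\<lambda>i. {..<n m i})))" by auto
  ultimately show ?thesis by (rule finite_subset)
qed

lemma emp_mean_card:
  fixes n :: "nat \<Rightarrow> nat \<Rightarrow> nat"
  shows "(\<Sum>k<n m i. of_bool (\<omega> (m, i, k)) :: real) = real (card {x \<in> (\<lambda>k. (m,i,k)) ` {..<n m i}. \<omega> x})"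
proof -
  have "{x \<in> (\<lambda>k. (m,i,k)) ` {..<n m i}. \<omega> x} = (\<lambda>k. (m,i,k)) ` ({..<n m i} \<inter> {k. \<omega> (m,i,k)})"
    by auto
  moreover have "card ((\<lambda>k. (m,i,k)) ` ({..<n m i} \<inter> {k. \<omega> (m,i,k)})) = card ({..<n m i} \<inter> {k. \<omega> (m,i,k)})"
    by (rule card_image) (auto simp: inj_on_def)
  moreover have "(\<Sum>k<n m i. of_bool (\<omega> (m,i,k)) :: real) = real (card ({..<n m i} \<inter> {k. \<omega> (m,i,k)}))"
    by (rule sum_of_bool_eq) simp_all
  ultimately show ?thesis by simp
qed

lemma arm_hoeffding:
  assumes mi: "m < M" "i < K" and n: "n m i > 0" and \<mu>: "0 \<le> \<mu> m i" "\<mu> m i \<le> 1" and t: "t \<ge> 0"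
  shows "measure_pmf.prob (reward_pmf M K n \<mu>) {\<omega>. \<bar>emp_mean n \<omega> m i - \<mu> m i\<bar> \<ge> t}
         \<le> 2 * exp (-2 * real (n m i) * t\<^sup>2)"
proof -
  define B where "B = (\<lambda>k. (m,i,k)) ` {..<n m i}"
  have BA: "B \<subseteq> armset M K n" using mi by (auto simp: B_def armset_def)
  have cardB: "card B = n m i" unfolding B_def by (subst card_image) (auto simp: inj_on_def)
  have finB: "finite B" unfolding B_def by simp
  have em: "emp_mean n \<omega> m i = real (card {x\<in>B. \<omega> x}) / real (n m i)" for \<omega>
    unfolding emp_mean_def B_def by (simp only: emp_mean_card)
  have "measure_pmf.prob (reward_pmf M K n \<mu>) {\<omega>. \<bar>emp_mean n \<omega> m i - \<mu> m i\<bar> \<ge> t}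
      = measure_pmf.prob (Pi_pmf (armset M K n) False (\<lambda>(m, i, k). bernoulli_pmf (\<mu> m i)))
          {\<omega>. \<bar>real (card {x\<in>B. \<omega> x}) / real (n m i) - \<mu> m i\<bar> \<ge> t}"
    unfolding reward_pmf_def armset_def[symmetric] em ..
  also have "\<dots> = measure_pmf.prob (Pi_pmf B False (\<lambda>(m, i, k). bernoulli_pmf (\<mu> m i)))
          {\<omega>. \<bar>real (card {x\<in>B. \<omega> x}) / real (n m i) - \<mu> m i\<bar> \<ge> t}"
  proof (rule prob_Pi_pmf_local[OF finite_armset BA])
    fix f g :: "nat \<times> nat \<times> nat \<Rightarrow> bool" assume "\<forall>x\<in>B. f x = g x"
    hence "{x\<in>B. f x} = {x\<in>B. g x}" by auto
    thus "(\<bar>real (card {x\<in>B. f x}) / real (n m i) - \<mu> m i\<bar> \<ge> t) = (\<bar>real (card {x\<in>B. g x}) / real (n m i) - \<mu> m i\<bar> \<ge> t)"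
      by simp
  qed
  also have "Pi_pmf B False (\<lambda>(m, i, k). bernoulli_pmf (\<mu> m i)) = Pi_pmf B False (\<lambda>_. bernoulli_pmf (\<mu> m i))"
    by (rule Pi_pmf_cong) (auto simp: B_def)
  also have "measure_pmf.prob (Pi_pmf B False (\<lambda>_. bernoulli_pmf (\<mu> m i)))
          {\<omega>. \<bar>real (card {x\<in>B. \<omega> x}) / real (n m i) - \<mu> m i\<bar> \<ge> t}
        = measure_pmf.prob (map_pmf (\<lambda>f. card {x\<in>B. f x}) (Pi_pmf B False (\<lambda>_. bernoulli_pmf (\<mu> m i))))
          {x. \<bar>real x / real (n m i) - \<mu> m i\<bar> \<ge> t}"
    by simp
  also have "map_pmf (\<lambda>f. card {x\<in>B. f x}) (Pi_pmf B False (\<lambda>_. bernoulli_pmf (\<mu> m i))) = binomial_pmf (n m i) (\<mu> m i)"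
    by (rule binomial_pmf_altdef'[symmetric]) (use finB cardB \<mu> in auto)
  also have "measure_pmf.prob (binomial_pmf (n m i) (\<mu> m i)) {x. \<bar>real x / real (n m i) - \<mu> m i\<bar> \<ge> t}
      \<le> 2 * exp (-2 * real (n m i) * t\<^sup>2)"
  proof -
    have bd: "binomial_distribution (\<mu> m i)" unfolding binomial_distribution_def using \<mu> by simp
    have "real_of_int (- 2 * int (n m i)) = -2 * real (n m i)" by simp
    thus ?thesis using binomial_distribution.prob_abs_ge'[OF bd n t] by simp
  qed
  finally show ?thesis .
qed

lemma emp_mean_local:
  assumes "m < M" "i < K" "\<forall>y\<in>{y \<in> armset M K n. fst y = m}. f y = g y"
  shows "emp_mean n f m i = emp_mean n g m i"
proof -
  have "f (m, i, j) = g (m, i, j)" if "j < n m i" for j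
  proof -
    have "(m, i, j) \<in> {y \<in> armset M K n. fst y = m}" using assms(1,2) that by (simp add: armset_def)
    thus ?thesis using assms(3) by blast
  qed
  hence "(\<Sum>j<n m i. of_bool (f (m, i, j)) :: real) = (\<Sum>j<n m i. of_bool (g (m, i, j)))"
    by (intro sum.cong) auto
  thus ?thesis unfolding emp_mean_def by simp
qed

lemma count_bound:
  fixes P :: "'a pmf" and Bad :: "nat \<Rightarrow> 'a \<Rightarrow> bool" and G :: "nat set"
  assumes G: "finite G"
    and indep: "\<And>T. T \<subseteq> G \<Longrightarrow> measure_pmf.prob P {\<omega>. \<forall>m\<in>T. Bad m \<omega>} = (\<Prod>m\<in>T. measure_pmf.prob P {\<omega>. Bad m \<omega>})"
    and pb: "\<And>m. m \<in> G \<Longrightarrow> measure_pmf.prob P {\<omega>. Bad m \<omega>} \<le> p" and p0: "p \<ge> 0"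
  shows "measure_pmf.prob P {\<omega>. r \<le> card {m\<in>G. Bad m \<omega>}} \<le> 2 ^ card G * p ^ r"
proof -
  define F where "F = {T. T \<subseteq> G \<and> card T = r}"
  have finF: "finite F" unfolding F_def using G by (auto intro: finite_subset[of _ "Pow G"])
  have cardF: "card F \<le> 2 ^ card G"
  proof -
    have "F \<subseteq> Pow G" unfolding F_def by auto
    hence "card F \<le> card (Pow G)" using G by (intro card_mono) auto
    thus ?thesis using G by (simp add: card_Pow)
  qed
  have sub: "{\<omega>. r \<le> card {m\<in>G. Bad m \<omega>}} \<subseteq> (\<Union>T\<in>F. {\<omega>. \<forall>m\<in>T. Bad m \<omega>})"
  proof
    fix \<omega> assume "\<omega> \<in> {\<omega>. r \<le> card {m\<in>G. Bad m \<omega>}}"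
    hence "r \<le> card {m\<in>G. Bad m \<omega>}" by simp
    then obtain T where T: "T \<subseteq> {m\<in>G. Bad m \<omega>}" "card T = r"
      using obtain_subset_with_card_n by metis
    hence "T \<in> F" unfolding F_def by auto
    thus "\<omega> \<in> (\<Union>T\<in>F. {\<omega>. \<forall>m\<in>T. Bad m \<omega>})" using T by auto
  qed
  have "measure_pmf.prob P {\<omega>. r \<le> card {m\<in>G. Bad m \<omega>}} \<le> measure_pmf.prob P (\<Union>T\<in>F. {\<omega>. \<forall>m\<in>T. Bad m \<omega>})"
    by (rule measure_pmf.finite_measure_mono[OF sub]) simp
  also have "\<dots> \<le> (\<Sum>T\<in>F. measure_pmf.prob P {\<omega>. \<forall>m\<in>T. Bad m \<omega>})"
    by (rule measure_pmf.finite_measure_subadditive_finite[OF finF]) simp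
  also have "\<dots> \<le> (\<Sum>T\<in>F. p ^ r)"
  proof (rule sum_mono)
    fix T assume "T \<in> F"
    hence T: "T \<subseteq> G" "card T = r" unfolding F_def by auto
    have "measure_pmf.prob P {\<omega>. \<forall>m\<in>T. Bad m \<omega>} = (\<Prod>m\<in>T. measure_pmf.prob P {\<omega>. Bad m \<omega>})"
      by (rule indep[OF T(1)])
    also have "\<dots> \<le> (\<Prod>m\<in>T. p)"
      by (rule prod_mono) (use T pb in auto)
    also have "\<dots> = p ^ r" using T by simp
    finally show "measure_pmf.prob P {\<omega>. \<forall>m\<in>T. Bad m \<omega>} \<le> p ^ r" .
  qed
  also have "\<dots> = real (card F) * p ^ r" by simp
  also have "\<dots> \<le> 2 ^ card G * p ^ r"
  proof -
    have "real (card F) \<le> 2 ^ card G" using cardF by (metis of_nat_le_iff of_nat_numeral of_nat_power)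
    thus ?thesis using p0 by (intro mult_right_mono) auto
  qed
  finally show ?thesis .
qed

lemma sorted_rev_nth_mono:
  fixes xs :: "real list"
  assumes "i \<le> j" "j < length xs"
  shows "rev (sort xs) ! j \<le> rev (sort xs) ! i"
proof -
  let ?s = "sort xs"
  have len: "length ?s = length xs" by simp
  have "rev ?s ! j = ?s ! (length ?s - Suc j)" using assms by (simp add: rev_nth)
  moreover have "rev ?s ! i = ?s ! (length ?s - Suc i)" using assms by (simp add: rev_nth)
  moreover have "?s ! (length ?s - Suc j) \<le> ?s ! (length ?s - Suc i)"
    by (rule sorted_nth_mono) (use assms len in auto)
  ultimately show ?thesis by simp
qed

lemma length_filter_rev_sort: "length (filter P (rev (sort xs))) = length (filter P xs)"
proof -
  have "mset (filter P (rev (sort xs))) = mset (filter P xs)" by simp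
  thus ?thesis by (metis size_mset)
qed

lemma kth_gt:
  fixes xs :: "real list"
  assumes k: "1 \<le> k" "k \<le> length xs" and a: "kth_largest k xs > a"
  shows "k \<le> length (filter (\<lambda>v. v > a) xs)"
proof -
  let ?ys = "rev (sort xs)"
  have "\<forall>v\<in>set (take k ?ys). v > a"
  proof
    fix v assume "v \<in> set (take k ?ys)"
    then obtain j where j: "j < length (take k ?ys)" "take k ?ys ! j = v" by (metis in_set_conv_nth)
    hence "j < k" "v = ?ys ! j" by auto
    moreover have "?ys ! (k - 1) \<le> ?ys ! j"
      by (rule sorted_rev_nth_mono) (use k \<open>j < k\<close> in auto)
    ultimately show "v > a" using a unfolding kth_largest_def by simp
  qed
  hence "filter (\<lambda>v. v > a) (take k ?ys) = take k ?ys" by simp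
  hence "k = length (filter (\<lambda>v. v > a) (take k ?ys))" using k by simp
  also have "\<dots> \<le> length (filter (\<lambda>v. v > a) ?ys)"
  proof -
    have "filter (\<lambda>v. v > a) ?ys = filter (\<lambda>v. v > a) (take k ?ys) @ filter (\<lambda>v. v > a) (drop k ?ys)"
      by (metis append_take_drop_id filter_append)
    thus ?thesis by simp
  qed
  also have "\<dots> = length (filter (\<lambda>v. v > a) xs)" by (rule length_filter_rev_sort)
  finally show ?thesis .
qed

lemma kth_ge:
  fixes xs :: "real list"
  assumes k: "1 \<le> k" "k \<le> length (filter (\<lambda>v. v \<ge> a) xs)"
  shows "kth_largest k xs \<ge> a"
proof (rule ccontr)
  assume "\<not> kth_largest k xs \<ge> a"
  hence lt: "rev (sort xs) ! (k - 1) < a" unfolding kth_largest_def by simp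
  let ?ys = "rev (sort xs)"
  have kl: "k \<le> length xs" using k(2) length_filter_le[of "\<lambda>v. v \<ge> a" xs] by linarith
  have "\<forall>v\<in>set (drop (k - 1) ?ys). \<not> v \<ge> a"
  proof
    fix v assume "v \<in> set (drop (k - 1) ?ys)"
    then obtain j where j: "j < length (drop (k - 1) ?ys)" "drop (k - 1) ?ys ! j = v" by (metis in_set_conv_nth)
    hence v: "v = ?ys ! (k - 1 + j)" "k - 1 + j < length xs" by auto
    have "?ys ! (k - 1 + j) \<le> ?ys ! (k - 1)"
      by (rule sorted_rev_nth_mono) (use v in auto)
    thus "\<not> v \<ge> a" using lt v by simp
  qed
  hence "filter (\<lambda>v. v \<ge> a) (drop (k - 1) ?ys) = []" by (simp add: filter_empty_conv)
  moreover have "filter (\<lambda>v. v \<ge> a) ?ys = filter (\<lambda>v. v \<ge> a) (take (k - 1) ?ys) @ filter (\<lambda>v. v \<ge> a) (drop (k - 1) ?ys)"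
    by (metis append_take_drop_id filter_append)
  ultimately have "length (filter (\<lambda>v. v \<ge> a) ?ys) \<le> k - 1"
    by (metis append.right_neutral length_filter_le length_take min.bounded_iff)
  thus False using k length_filter_rev_sort[of "\<lambda>v. v \<ge> a" xs] by linarith
qed

lemma length_filter_map_upt:
  "length (filter P (map f [0..<M])) = card {j. j < M \<and> P (f j)}"
proof -
  have "{i. i < M \<and> P (map f [0..<M] ! i)} = {j. j < M \<and> P (f j)}" by auto
  thus ?thesis by (simp add: length_filter_conv_card)
qed

lemma finite_pairs: "finite {F i j | i j. i < (K::nat) \<and> j < K \<and> i \<noteq> j}"
proof -
  have "{F i j | i j. i < K \<and> j < K \<and> i \<noteq> j} \<subseteq> (\<lambda>(i, j). F i j) ` ({..<K} \<times> {..<K})" by auto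
  thus ?thesis by (rule finite_subset) auto
qed

lemma nonempty_pairs: assumes "(K::nat) \<ge> 2" shows "{F i j | i j. i < K \<and> j < K \<and> i \<noteq> j} \<noteq> {}"
proof -
  have "\<exists>i j. F 0 1 = F i j \<and> i < K \<and> j < K \<and> i \<noteq> j"
    by (rule exI[of _ 0], rule exI[of _ 1]) (use assms in auto)
  thus ?thesis by blast
qed

lemma lip_upper:
  fixes x :: "nat \<Rightarrow> real^'d::finite"
  assumes K2: "K \<ge> 2" and gap: "\<forall>i<K. \<forall>j<K. i \<noteq> j \<longrightarrow> \<Delta> \<le> norm (x i - x j)" and \<Delta>: "\<Delta> > 0"
    and glip: "\<forall>i<K. \<forall>j<K. \<bar>g i - g j\<bar> \<le> L * norm (x i - x j)"
    and close: "\<forall>i<K. \<bar>h i - g i\<bar> < t" and te: "2 * t \<le> e * \<Delta>" and e: "e \<ge> 0"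
  shows "lip_const K x h \<le> L + e"
  unfolding lip_const_def
proof (subst Max_le_iff[OF finite_pairs nonempty_pairs[OF K2]], safe)
  fix i j assume ij: "i < K" "j < K" "i \<noteq> j"
  define d where "d = norm (x i - x j)"
  have dge: "\<Delta> \<le> d" using gap ij unfolding d_def by blast
  have dpos: "d > 0" using dge \<Delta> by linarith
  have "\<bar>h i - h j\<bar> \<le> \<bar>g i - g j\<bar> + \<bar>h i - g i\<bar> + \<bar>h j - g j\<bar>" by linarith
  also have "\<dots> \<le> L * d + 2 * t"
  proof -
    have "\<bar>h i - g i\<bar> < t" "\<bar>h j - g j\<bar> < t" "\<bar>g i - g j\<bar> \<le> L * d"
      using glip close ij unfolding d_def by auto
    thus ?thesis by linarith
  qed
  also have "\<dots> \<le> L * d + e * d" using te mult_left_mono[OF dge e] by linarith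
  finally have "\<bar>h i - h j\<bar> \<le> (L + e) * d" by (simp add: algebra_simps)
  thus "\<bar>h i - h j\<bar> / norm (x i - x j) \<le> L + e" using dpos unfolding d_def[symmetric]
    by (simp add: divide_le_eq)
qed

lemma lip_lower:
  fixes x :: "nat \<Rightarrow> real^'d::finite"
  assumes K2: "K \<ge> 2" and gap: "\<forall>i<K. \<forall>j<K. i \<noteq> j \<longrightarrow> \<Delta> \<le> norm (x i - x j)" and \<Delta>: "\<Delta> > 0"
    and glip: "lip_const K x g \<ge> a"
    and close: "\<forall>i<K. \<bar>h i - g i\<bar> < t" and te: "2 * t \<le> e * \<Delta>" and e: "e \<ge> 0"
  shows "lip_const K x h \<ge> a - e"
proof -
  have "lip_const K x g \<in> {\<bar>g i - g j\<bar> / norm (x i - x j) | i j. i < K \<and> j < K \<and> i \<noteq> j}"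
    unfolding lip_const_def by (rule Max_in[OF finite_pairs nonempty_pairs[OF K2]])
  then obtain i j where ij: "i < K" "j < K" "i \<noteq> j" and eq: "lip_const K x g = \<bar>g i - g j\<bar> / norm (x i - x j)"
    by blast
  define d where "d = norm (x i - x j)"
  have dge: "\<Delta> \<le> d" using gap ij unfolding d_def by blast
  have dpos: "d > 0" using dge \<Delta> by linarith
  have "a * d \<le> \<bar>g i - g j\<bar>" using glip eq dpos unfolding d_def[symmetric] by (simp add: le_divide_eq)
  moreover have "\<bar>g i - g j\<bar> \<le> \<bar>h i - h j\<bar> + \<bar>h i - g i\<bar> + \<bar>h j - g j\<bar>" by linarith
  moreover have "\<bar>h i - g i\<bar> + \<bar>h j - g j\<bar> \<le> e * d"
  proof -
    have "\<bar>h i - g i\<bar> < t" "\<bar>h j - g j\<bar> < t" using close ij by auto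
    thus ?thesis using te mult_left_mono[OF dge e] by linarith
  qed
  ultimately have "(a - e) * d \<le> \<bar>h i - h j\<bar>" by (simp add: algebra_simps)
  hence "a - e \<le> \<bar>h i - h j\<bar> / norm (x i - x j)" using dpos unfolding d_def[symmetric] by (simp add: le_divide_eq)
  also have "\<dots> \<le> lip_const K x h" unfolding lip_const_def
    by (rule Max_ge[OF finite_pairs]) (use ij in blast)
  finally show ?thesis .
qed

theorem lemma1:
  fixes K M :: nat and x :: "nat \<Rightarrow> real^'d::finite" and \<mu> :: "nat \<Rightarrow> nat \<Rightarrow> real"
    and n :: "nat \<Rightarrow> nat \<Rightarrow> nat"
    and L \<alpha> \<epsilon>\<alpha> \<tau> \<beta> \<epsilon>\<beta> :: real
  assumes K2: "K \<ge> 2" and M1: "M \<ge> 1"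
    and x_cube: "\<forall>i<K. \<forall>j. 0 \<le> x i $ j \<and> x i $ j \<le> 1"
    and x_inj: "inj_on x {..<K}"
    and L_pos: "L > 0"
    and \<mu>_range: "\<forall>m<M. \<forall>i<K. 0 \<le> \<mu> m i \<and> \<mu> m i \<le> 1"
    and \<mu>_lip: "\<forall>m<M. \<forall>i<K. \<forall>j<K. \<bar>\<mu> m i - \<mu> m j\<bar> \<le> L * norm (x i - x j)"
    and \<alpha>_pos: "\<alpha> > 0" and \<epsilon>\<alpha>_pos: "\<epsilon>\<alpha> > 0"
    and learnable: "real (card {m. m < M \<and> lip_const K x (\<mu> m) \<ge> L - \<epsilon>\<alpha>}) \<ge> \<alpha> * real M"
    and \<tau>_pos: "\<tau> > 0"
    and explore: "\<forall>m<M. \<forall>i<K. real (n m i) \<ge> \<tau>"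
    and \<beta>: "0 < \<beta>" "\<beta> < \<alpha>"
    and \<epsilon>\<beta>: "\<epsilon>\<beta> > \<epsilon>\<alpha>"
    and \<tau>_large: "\<tau> \<ge> 4 / ((min_gap K x)\<^sup>2 * (\<epsilon>\<beta> - \<epsilon>\<alpha>)\<^sup>2)
                   * (ln (2 * real K) + 1 / min \<beta> (\<alpha> - \<beta>))"
  shows "let P = measure_pmf.prob (reward_pmf M K n \<mu>);
             lb = (\<lambda>\<omega>. kth_largest (nat \<lceil>\<beta> * real M\<rceil>)
                     (map (\<lambda>m. lip_const K x (emp_mean n \<omega> m)) [0..<M]));
             \<epsilon>' = \<epsilon>\<beta> - \<epsilon>\<alpha>
         in P {\<omega>. L > lb \<omega> + \<epsilon>\<beta>} + P {\<omega>. lb \<omega> > L + \<epsilon>'}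
            \<le> 8 * real M * exp (- ((min_gap K x)\<^sup>2 * \<epsilon>'\<^sup>2 / 4) * min \<beta> (\<alpha> - \<beta>) * \<tau> * real M)"
proof -
  define \<Delta> where "\<Delta> = min_gap K x"
  define e where "e = \<epsilon>\<beta> - \<epsilon>\<alpha>"
  define t where "t = e * \<Delta> / 2"
  define mm where "mm = min \<beta> (\<alpha> - \<beta>)"
  define k where "k = nat \<lceil>\<beta> * real M\<rceil>"
  define G where "G = {m. m < M \<and> lip_const K x (\<mu> m) \<ge> L - \<epsilon>\<alpha>}"
  define Bad where "Bad = (\<lambda>m \<omega>. \<exists>i<K. \<bar>emp_mean n \<omega> m i - \<mu> m i\<bar> \<ge> t)"
  define hatL where "hatL = (\<lambda>\<omega> m. lip_const K x (emp_mean n \<omega> m))"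
  define lb where "lb = (\<lambda>\<omega>. kth_largest k (map (hatL \<omega>) [0..<M]))"
  define c where "c = \<Delta>\<^sup>2 * e\<^sup>2 / 4"
  define p where "p = 2 * real K * exp (-2 * \<tau> * t\<^sup>2)"
  define \<Omega> where "\<Omega> = reward_pmf M K n \<mu>"
  define X where "X = - c * mm * \<tau> * real M"

  have epos: "e > 0" using \<epsilon>\<beta> unfolding e_def by simp
  have mmpos: "mm > 0" using \<beta> unfolding mm_def by simp
  have gap: "\<forall>i<K. \<forall>j<K. i \<noteq> j \<longrightarrow> \<Delta> \<le> norm (x i - x j)"
    unfolding \<Delta>_def min_gap_def by (auto intro!: Min_le[OF finite_pairs])
  have \<Delta>pos: "\<Delta> > 0"
  proof -
    have "\<Delta> \<in> {norm (x i - x j) | i j. i < K \<and> j < K \<and> i \<noteq> j}"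
      unfolding \<Delta>_def min_gap_def by (rule Min_in[OF finite_pairs nonempty_pairs[OF K2]])
    then obtain i j where ij: "i < K" "j < K" "i \<noteq> j" "\<Delta> = norm (x i - x j)" by blast
    have "x i \<noteq> x j" using x_inj ij unfolding inj_on_def by blast
    thus ?thesis using ij by simp
  qed
  have te: "2 * t \<le> e * \<Delta>" unfolding t_def by simp
  have t0: "t \<ge> 0" unfolding t_def using epos \<Delta>pos by simp
  have npos: "\<forall>m<M. \<forall>i<K. n m i > 0"
  proof (intro allI impI)
    fix m i assume "m < M" "i < K"
    hence "real (n m i) \<ge> \<tau>" using explore by blast
    thus "n m i > 0" using \<tau>_pos by simp
  qed
  have Gsub: "G \<subseteq> {..<M}" unfolding G_def by auto
  have finG: "finite G" using Gsub finite_subset by blast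
  have cardG_M: "card G \<le> M" using card_mono[OF _ Gsub] by simp
  have cardG: "real (card G) \<ge> \<alpha> * real M" using learnable unfolding G_def .
  have k1: "real k \<ge> \<beta> * real M" "real k < \<beta> * real M + 1"
  proof -
    have "\<beta> * real M \<ge> 0" using \<beta> by simp
    hence "\<lceil>\<beta> * real M\<rceil> \<ge> 0" by simp
    hence "real k = real_of_int \<lceil>\<beta> * real M\<rceil>" unfolding k_def by simp
    thus "real k \<ge> \<beta> * real M" "real k < \<beta> * real M + 1"
      using ceiling_correct[of "\<beta> * real M"] by linarith+
  qed
  have kpos: "k \<ge> 1"
  proof -
    have "\<beta> * real M > 0" using \<beta> M1 by simp
    thus ?thesis unfolding k_def by linarith
  qed
  have kG: "k \<le> card G"
  proof -
    have "\<beta> * real M < \<alpha> * real M" using \<beta> M1 by simp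
    hence "real k < real (card G) + 1" using k1 cardG by linarith
    thus ?thesis by linarith
  qed
  have kM: "k \<le> M" using kG cardG_M by linarith
  have \<Omega>_def': "\<Omega> = Pi_pmf (armset M K n) False (\<lambda>(m, i, k). bernoulli_pmf (\<mu> m i))"
    unfolding \<Omega>_def reward_pmf_def armset_def ..
  have pb: "measure_pmf.prob \<Omega> {\<omega>. Bad m \<omega>} \<le> p" if m: "m < M" for m
  proof -
    have "{\<omega>. Bad m \<omega>} = (\<Union>i\<in>{..<K}. {\<omega>. \<bar>emp_mean n \<omega> m i - \<mu> m i\<bar> \<ge> t})"
      unfolding Bad_def by auto
    hence "measure_pmf.prob \<Omega> {\<omega>. Bad m \<omega>} \<le> (\<Sum>i\<in>{..<K}. measure_pmf.prob \<Omega> {\<omega>. \<bar>emp_mean n \<omega> m i - \<mu> m i\<bar> \<ge> t})"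
      using measure_pmf.finite_measure_subadditive_finite[of "{..<K}" "\<lambda>i. {\<omega>. \<bar>emp_mean n \<omega> m i - \<mu> m i\<bar> \<ge> t}" \<Omega>]
      by simp
    also have "\<dots> \<le> (\<Sum>i\<in>{..<K}. 2 * exp (-2 * \<tau> * t\<^sup>2))"
    proof (rule sum_mono)
      fix i assume i: "i \<in> {..<K}"
      have "measure_pmf.prob \<Omega> {\<omega>. \<bar>emp_mean n \<omega> m i - \<mu> m i\<bar> \<ge> t} \<le> 2 * exp (-2 * real (n m i) * t\<^sup>2)"
        unfolding \<Omega>_def by (rule arm_hoeffding) (use m i npos \<mu>_range t0 in auto)
      also have "\<dots> \<le> 2 * exp (-2 * \<tau> * t\<^sup>2)"
      proof -
        have "real (n m i) \<ge> \<tau>" using explore m i by auto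
        hence "-2 * real (n m i) * t\<^sup>2 \<le> -2 * \<tau> * t\<^sup>2"
          by (intro mult_right_mono) auto
        thus ?thesis by simp
      qed
      finally show "measure_pmf.prob \<Omega> {\<omega>. \<bar>emp_mean n \<omega> m i - \<mu> m i\<bar> \<ge> t} \<le> 2 * exp (-2 * \<tau> * t\<^sup>2)" .
    qed
    also have "\<dots> = p" unfolding p_def by simp
    finally show ?thesis .
  qed
  have p0: "p \<ge> 0" unfolding p_def by simp
  have indep: "measure_pmf.prob \<Omega> {\<omega>. \<forall>m\<in>T. Bad m \<omega>} = (\<Prod>m\<in>T. measure_pmf.prob \<Omega> {\<omega>. Bad m \<omega>})"
    if T: "T \<subseteq> {..<M}" for T
    unfolding \<Omega>_def'
  proof (rule prob_Pi_pmf_indep[where J = "\<lambda>m. {y \<in> armset M K n. fst y = m}"])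
    show "finite (armset M K n)" by (rule finite_armset)
    show "finite T" using T finite_subset by blast
    show "\<forall>m\<in>T. {y \<in> armset M K n. fst y = m} \<subseteq> armset M K n" by blast
    show "disjoint_family_on (\<lambda>m. {y \<in> armset M K n. fst y = m}) T"
      unfolding disjoint_family_on_def by blast
    show "Bad m f = Bad m g" if "m \<in> T" "\<forall>y\<in>{y \<in> armset M K n. fst y = m}. f y = g y" for m f g
    proof -
      have mM: "m < M" using T \<open>m \<in> T\<close> by blast
      have "emp_mean n f m i = emp_mean n g m i" if i: "i < K" for i
        by (rule emp_mean_local[OF mM i]) (use \<open>\<forall>y\<in>{y \<in> armset M K n. fst y = m}. f y = g y\<close> in simp)
      thus ?thesis unfolding Bad_def by auto
    qed
  qed
  have cpos: "c > 0" unfolding c_def using \<Delta>pos epos by simp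
  have ct: "c * \<tau> \<ge> ln (2 * real K) + 1 / mm"
  proof -
    have "c * (4 / (\<Delta>\<^sup>2 * e\<^sup>2)) = 1" unfolding c_def using \<Delta>pos epos by (simp add: field_simps)
    moreover have "c * \<tau> \<ge> c * (4 / (\<Delta>\<^sup>2 * e\<^sup>2) * (ln (2 * real K) + 1 / mm))"
      using \<tau>_large unfolding \<Delta>_def[symmetric] e_def[symmetric] mm_def[symmetric]
      by (intro mult_left_mono) (auto simp: c_def)
    ultimately show ?thesis using cpos by (simp add: mult.assoc[symmetric])
  qed
  have pq: "p \<le> exp (- (c * \<tau> + 1 / mm))"
  proof -
    have "2 * \<tau> * t\<^sup>2 = 2 * (c * \<tau>)" unfolding t_def c_def by (simp add: power2_eq_square field_simps)
    have "p = exp (ln (2 * real K) - 2 * \<tau> * t\<^sup>2)"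
      unfolding p_def using K2 by (simp add: exp_diff exp_minus divide_inverse)
    also have "\<dots> \<le> exp (- (c * \<tau> + 1 / mm))"
    proof -
      have "ln (2 * real K) - 2 * \<tau> * t\<^sup>2 \<le> - (c * \<tau> + 1 / mm)"
        using ct \<open>2 * \<tau> * t\<^sup>2 = 2 * (c * \<tau>)\<close> by linarith
      thus ?thesis by (simp only: exp_le_cancel_iff)
    qed
    finally show ?thesis .
  qed
  have arith: "2 ^ M * p ^ r \<le> exp X" if r: "real r \<ge> mm * real M" for r
  proof -
    have "p ^ r \<le> exp (- (c * \<tau> + 1 / mm)) ^ r" by (rule power_mono[OF pq p0])
    also have "\<dots> = exp (- (c * \<tau> + 1 / mm) * real r)"
      by (simp add: exp_of_nat_mult[symmetric] mult.commute)
    also have "\<dots> \<le> exp (- (c * \<tau> + 1 / mm) * (mm * real M))"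
    proof -
      have "(c * \<tau> + 1 / mm) * (mm * real M) \<le> (c * \<tau> + 1 / mm) * real r"
        using r cpos \<tau>_pos mmpos by (intro mult_left_mono) auto
      hence "- (c * \<tau> + 1 / mm) * real r \<le> - (c * \<tau> + 1 / mm) * (mm * real M)"
        by (simp only: mult_minus_left neg_le_iff_le)
      thus ?thesis by (simp only: exp_le_cancel_iff)
    qed
    also have "- (c * \<tau> + 1 / mm) * (mm * real M) = X - real M"
      unfolding X_def using mmpos by (simp add: field_simps)
    finally have pr: "p ^ r \<le> exp (X - real M)" .
    have two: "(2::real) ^ M \<le> exp (real M)"
    proof -
      have "(2::real) ^ M = exp (ln 2) ^ M" by simp
      also have "\<dots> = exp (real M * ln 2)" by (simp add: exp_of_nat_mult)
      also have "\<dots> \<le> exp (real M)"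
      proof -
        have "ln (2::real) \<le> 1" using ln_le_minus_one[of 2] by simp
        thus ?thesis by (simp add: mult_left_le)
      qed
      finally show ?thesis .
    qed
    have "2 ^ M * p ^ r \<le> exp (real M) * exp (X - real M)"
      by (rule mult_mono[OF two pr]) (auto simp: p0)
    also have "\<dots> = exp X" by (simp add: exp_add[symmetric])
    finally show ?thesis .
  qed
  define r1 where "r1 = card G + 1 - k"
  have r1: "real r1 \<ge> mm * real M"
  proof -
    have "real r1 = real (card G) + 1 - real k" unfolding r1_def using kG by auto
    moreover have "mm * real M \<le> (\<alpha> - \<beta>) * real M" unfolding mm_def by (intro mult_right_mono) auto
    ultimately show ?thesis using k1 cardG by (simp add: algebra_simps)
  qed
  have E1: "{\<omega>. L > lb \<omega> + \<epsilon>\<beta>} \<subseteq> {\<omega>. r1 \<le> card {m\<in>G. Bad m \<omega>}}"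
  proof safe
    fix \<omega> assume lt: "L > lb \<omega> + \<epsilon>\<beta>"
    define A where "A = {j. j < M \<and> hatL \<omega> j \<ge> L - \<epsilon>\<beta>}"
    have "card A < k"
    proof (rule ccontr)
      assume "\<not> card A < k"
      hence "k \<le> length (filter (\<lambda>v. v \<ge> L - \<epsilon>\<beta>) (map (hatL \<omega>) [0..<M]))"
        unfolding A_def length_filter_map_upt by simp
      hence "lb \<omega> \<ge> L - \<epsilon>\<beta>" unfolding lb_def by (rule kth_ge[OF kpos])
      thus False using lt by simp
    qed
    have "G - {m\<in>G. Bad m \<omega>} \<subseteq> A"
    proof
      fix m assume m: "m \<in> G - {m\<in>G. Bad m \<omega>}"
      hence mM: "m < M" and lg: "lip_const K x (\<mu> m) \<ge> L - \<epsilon>\<alpha>" and nb: "\<not> Bad m \<omega>" unfolding G_def by auto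
      have "lip_const K x (emp_mean n \<omega> m) \<ge> (L - \<epsilon>\<alpha>) - e"
        by (rule lip_lower[OF K2 gap \<Delta>pos lg _ te]) (use nb epos in \<open>auto simp: Bad_def\<close>)
      thus "m \<in> A" unfolding A_def hatL_def e_def using mM by simp
    qed
    hence "card (G - {m\<in>G. Bad m \<omega>}) \<le> card A"
      by (intro card_mono) (auto simp: A_def)
    moreover have "card (G - {m\<in>G. Bad m \<omega>}) = card G - card {m\<in>G. Bad m \<omega>}"
      by (rule card_Diff_subset) (use finG in auto)
    ultimately show "r1 \<le> card {m\<in>G. Bad m \<omega>}" unfolding r1_def using \<open>card A < k\<close> kG by linarith
  qed
  have E2: "{\<omega>. lb \<omega> > L + e} \<subseteq> {\<omega>. k \<le> card {m\<in>{..<M}. Bad m \<omega>}}"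
  proof safe
    fix \<omega> assume gt: "lb \<omega> > L + e"
    have "k \<le> length (filter (\<lambda>v. v > L + e) (map (hatL \<omega>) [0..<M]))"
      by (rule kth_gt[OF kpos]) (use kM gt in \<open>simp_all add: lb_def\<close>)
    hence "k \<le> card {j. j < M \<and> hatL \<omega> j > L + e}" unfolding length_filter_map_upt .
    also have "\<dots> \<le> card {m\<in>{..<M}. Bad m \<omega>}"
    proof (rule card_mono)
      show "finite {m\<in>{..<M}. Bad m \<omega>}" by simp
      show "{j. j < M \<and> hatL \<omega> j > L + e} \<subseteq> {m\<in>{..<M}. Bad m \<omega>}"
      proof safe
        fix j assume j: "j < M" "hatL \<omega> j > L + e"
        show "Bad j \<omega>"
        proof (rule ccontr)
          assume nb: "\<not> Bad j \<omega>"
          have "lip_const K x (emp_mean n \<omega> j) \<le> L + e"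
            by (rule lip_upper[OF K2 gap \<Delta>pos _ _ te, where g = "\<mu> j"]) (use nb epos \<mu>_lip j in \<open>auto simp: Bad_def\<close>)
          thus False using j unfolding hatL_def by simp
        qed
      qed
    qed
    finally show "k \<le> card {m\<in>{..<M}. Bad m \<omega>}" .
  qed
  have P1: "measure_pmf.prob \<Omega> {\<omega>. L > lb \<omega> + \<epsilon>\<beta>} \<le> exp X"
  proof -
    have "measure_pmf.prob \<Omega> {\<omega>. L > lb \<omega> + \<epsilon>\<beta>} \<le> measure_pmf.prob \<Omega> {\<omega>. r1 \<le> card {m\<in>G. Bad m \<omega>}}"
      by (rule measure_pmf.finite_measure_mono[OF E1]) simp
    also have "\<dots> \<le> 2 ^ card G * p ^ r1"
      by (rule count_bound[OF finG _ pb p0]) (use indep Gsub in auto)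
    also have "\<dots> \<le> 2 ^ M * p ^ r1"
      by (intro mult_right_mono power_increasing) (use cardG_M p0 in auto)
    also have "\<dots> \<le> exp X" by (rule arith[OF r1])
    finally show ?thesis .
  qed
  have P2: "measure_pmf.prob \<Omega> {\<omega>. lb \<omega> > L + e} \<le> exp X"
  proof -
    have "measure_pmf.prob \<Omega> {\<omega>. lb \<omega> > L + e} \<le> measure_pmf.prob \<Omega> {\<omega>. k \<le> card {m\<in>{..<M}. Bad m \<omega>}}"
      by (rule measure_pmf.finite_measure_mono[OF E2]) simp
    also have "\<dots> \<le> 2 ^ card {..<M} * p ^ k"
      by (rule count_bound[OF _ _ pb p0]) (use indep in auto)
    also have "\<dots> = 2 ^ M * p ^ k" by simp
    also have "\<dots> \<le> exp X"
    proof (rule arith)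
      have "mm * real M \<le> \<beta> * real M" unfolding mm_def by (intro mult_right_mono) auto
      thus "mm * real M \<le> real k" using k1 by linarith
    qed
    finally show ?thesis .
  qed
  have "measure_pmf.prob \<Omega> {\<omega>. L > lb \<omega> + \<epsilon>\<beta>} + measure_pmf.prob \<Omega> {\<omega>. lb \<omega> > L + e} \<le> 8 * real M * exp X"
  proof -
    have "2 * exp X \<le> 8 * real M * exp X" using M1 by (intro mult_right_mono) auto
    thus ?thesis using P1 P2 by linarith
  qed
  thus ?thesis
    unfolding Let_def X_def c_def mm_def \<Delta>_def e_def lb_def hatL_def k_def \<Omega>_def by simp
qed

end
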